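(* Let $K\subset\mathbb{R}^n$ ($n\ge2$) be compact and not log-polar, let $\mu\in\mathcal M(K)$ with $I(\mu)<\infty$, and let $Q\in\mathcal A(K)$ be finite $\mu$-almost everywhere. Then there exist an increasing sequence of compact sets $K_m\subset K$ and measures $\mu_m\in\mathcal M(K_m)$ such that: (1) $\mu_m\to\mu$ weakly as $m\to\infty$; (2) $Q|_{K_m}\in C(K_m)$ for each $m$ and $\int Q\,d\mu_m\to\int Q\,d\mu$; (3) $I(\mu_m)\to I(\mu)$.
   Context: $\mathcal M(K)$: Borel probability measures on $K$, weak topology. $I(\mu)=\int\int\log\frac1{|x-y|}d\mu d\mu$; $K$ log-polar if $I=\infty$ on $\mathcal M(K)$ (a Borel set if all compact subsets are). $\mathcal A(K)$: lower semicontinuous $Q:K\to(-\infty,\infty]$ with $\{Q<\infty\}$ not log-polar. *)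

theory Defs
  imports "HOL-Probability.Probability"
begin

definition prob_measures_on :: "'a::euclidean_space set \<Rightarrow> 'a measure set" where
  "prob_measures_on K = {M. prob_space M \<and> sets M = sets borel \<and> emeasure M K = 1}"

definition log_kernel_pos :: "'a::euclidean_space \<Rightarrow> 'a \<Rightarrow> ennreal" where
  "log_kernel_pos x y = (if x = y then \<infinity> else ennreal (max 0 (- ln (dist x y))))"

definition log_kernel_neg :: "'a::euclidean_space \<Rightarrow> 'a \<Rightarrow> ennreal" where
  "log_kernel_neg x y = (if x = y then 0 else ennreal (max 0 (ln (dist x y))))"

definition log_energy :: "'a::euclidean_space measure \<Rightarrow> ereal" where
  "log_energy M =
     enn2ereal (\<integral>\<^sup>+ x. \<integral>\<^sup>+ y. log_kernel_pos x y \<partial>M \<partial>M)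
   - enn2ereal (\<integral>\<^sup>+ x. \<integral>\<^sup>+ y. log_kernel_neg x y \<partial>M \<partial>M)"

definition log_polar :: "'a::euclidean_space set \<Rightarrow> bool" where
  "log_polar E \<longleftrightarrow> (\<forall>C. C \<subseteq> E \<and> compact C \<longrightarrow> (\<forall>M \<in> prob_measures_on C. log_energy M = \<infinity>))"

definition lsc_on :: "'a::metric_space set \<Rightarrow> ('a \<Rightarrow> ereal) \<Rightarrow> bool" where
  "lsc_on K Q \<longleftrightarrow> (\<forall>t. openin (top_of_set K) {x \<in> K. t < Q x})"

definition admissible :: "'a::euclidean_space set \<Rightarrow> ('a \<Rightarrow> ereal) \<Rightarrow> bool" where
  "admissible K Q \<longleftrightarrow> lsc_on K Q \<and> (\<forall>x\<in>K. Q x \<noteq> -\<infinity>) \<and> \<not> log_polar {x \<in> K. Q x < \<infinity>}"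

definition ext_integral :: "'a measure \<Rightarrow> ('a \<Rightarrow> ereal) \<Rightarrow> ereal" where
  "ext_integral M f =
     enn2ereal (\<integral>\<^sup>+ x. e2ennreal (f x) \<partial>M) - enn2ereal (\<integral>\<^sup>+ x. e2ennreal (- f x) \<partial>M)"

definition weak_conv_to :: "(nat \<Rightarrow> 'a::topological_space measure) \<Rightarrow> 'a measure \<Rightarrow> bool" where
  "weak_conv_to Ms M \<longleftrightarrow>
     (\<forall>f :: 'a \<Rightarrow> real. continuous_on UNIV f \<and> bounded (range f) \<longrightarrow>
        (\<lambda>m. integral\<^sup>L (Ms m) f) \<longlonglongrightarrow> integral\<^sup>L M f)"

end

theory Submission
  imports Defs
begin


lemma kpos_meas: "(\<lambda>p. log_kernel_pos (fst p) (snd p)) \<in> borel_measurable (borel \<Otimes>\<^sub>M (borel::'a::euclidean_space measure))"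
  unfolding log_kernel_pos_def
  by measurable

lemma kneg_meas: "(\<lambda>p. log_kernel_neg (fst p) (snd p)) \<in> borel_measurable (borel \<Otimes>\<^sub>M (borel::'a::euclidean_space measure))"
  unfolding log_kernel_neg_def
  by measurable



lemma lsc_meas:
  fixes Q :: "'a::euclidean_space \<Rightarrow> ereal"
  assumes "lsc_on K Q" "closed K"
  shows "(\<lambda>x. if x \<in> K then Q x else 0) \<in> borel_measurable borel"
proof (rule borel_measurableI_greater)
  fix t :: ereal
  obtain T where T: "open T" "{x \<in> K. t < Q x} = K \<inter> T"
    using assms(1) unfolding lsc_on_def openin_open by blast
  have "{x \<in> space borel. t < (if x \<in> K then Q x else 0)} = (K \<inter> T) \<union> (if t < 0 then - K else {})"
    using T(2) by auto
  also have "\<dots> \<in> sets borel" using T(1) assms(2) by auto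
  finally show "{x \<in> space borel. t < (if x \<in> K then Q x else 0)} \<in> sets borel" .
qed

lemma inner_approx:
  fixes \<mu> :: "'a::euclidean_space measure"
  assumes sM: "sets \<mu> = sets borel" and fm: "finite_measure \<mu>" and B: "B \<in> sets borel" and d: "d > 0"
  shows "\<exists>F. compact F \<and> F \<subseteq> B \<and> measure \<mu> (B - F) < d"
proof -
  interpret finite_measure \<mu> by (rule fm)
  have sp: "space \<mu> = UNIV" using sets_eq_imp_space_eq[OF sM] by simp
  have B': "B \<in> sets \<mu>" using B sM by simp
  show ?thesis
  proof (cases "measure \<mu> B < d")
    case True
    then show ?thesis by (intro exI[of _ "{}"]) auto
  next
    case False
    have "emeasure \<mu> B = (SUP K \<in> {K. K \<subseteq> B \<and> compact K}. emeasure \<mu> K)"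
      by (rule inner_regular[OF sM _ B]) (simp add: sp)
    moreover have "ennreal (measure \<mu> B - d) < emeasure \<mu> B"
      using False d B' by (simp add: emeasure_eq_measure ennreal_lessI)
    ultimately obtain F where F: "F \<subseteq> B" "compact F" "ennreal (measure \<mu> B - d) < emeasure \<mu> F"
      by (auto simp: less_SUP_iff)
    have F': "F \<in> sets \<mu>" using F(2) sM by (simp add: borel_compact)
    have "measure \<mu> B - d < measure \<mu> F"
      using F(3) False by (simp add: emeasure_eq_measure ennreal_less_iff)
    moreover have "measure \<mu> (B - F) = measure \<mu> B - measure \<mu> F"
      using F(1) F' B' by (simp add: finite_measure_Diff)
    ultimately show ?thesis using F by (intro exI[of _ F]) auto
  qed
qed

lemma lusin:
  fixes \<mu> :: "'a::euclidean_space measure" and Q :: "'a \<Rightarrow> ereal"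
  assumes sM: "sets \<mu> = sets borel" and fm: "finite_measure \<mu>" and K: "compact K"
    and lsc: "lsc_on K Q" and ninf: "\<forall>x\<in>K. Q x \<noteq> -\<infinity>"
    and ae: "AE x in \<mu>. Q x < \<infinity>" and e: "e > 0"
  shows "\<exists>C. compact C \<and> C \<subseteq> K \<and> measure \<mu> (K - C) < e \<and> continuous_on C Q
             \<and> (\<forall>x\<in>C. \<bar>Q x\<bar> \<noteq> \<infinity>)"
proof -
  interpret finite_measure \<mu> by (rule fm)
  have sp: "space \<mu> = UNIV" using sets_eq_imp_space_eq[OF sM] by simp
  define Q' where "Q' = (\<lambda>x. if x \<in> K then Q x else 0)"
  have Q'm[measurable]: "Q' \<in> borel_measurable borel"
    unfolding Q'_def by (rule lsc_meas[OF lsc compact_imp_closed[OF K]])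
  have Kb[measurable]: "K \<in> sets borel" using K by (simp add: borel_compact)
  have lscT: "\<exists>T. open T \<and> {x \<in> K. t < Q x} = K \<inter> T" for t
    using lsc unfolding lsc_on_def openin_open by blast
  define r where "r = from_nat_into (\<rat> :: real set)"
  have rr: "range r = \<rat>" unfolding r_def
    by (rule range_from_nat_into) (auto simp: countable_rat)
  define A where "A n = {x\<in>K. Q x < ereal (r n)}" for n
  define G where "G n = {x\<in>K. ereal (r n) \<le> Q x}" for n
  have Ab: "A n \<in> sets borel" for n
  proof -
    have "A n = K \<inter> {x \<in> space borel. Q' x < ereal (r n)}"
      unfolding A_def Q'_def by auto
    also have "\<dots> \<in> sets borel" by measurable
    finally show ?thesis .
  qed
  have Gb: "G n \<in> sets borel" for n
  proof -
    have "G n = K \<inter> {x \<in> space borel. ereal (r n) \<le> Q' x}"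
      unfolding G_def Q'_def by auto
    also have "\<dots> \<in> sets borel" by measurable
    finally show ?thesis .
  qed
  define d where "d n = e/8 * (1/2)^n" for n :: nat
  have dpos: "d n > 0" for n using e by (simp add: d_def)
  have "\<forall>n. \<exists>F. compact F \<and> F \<subseteq> A n \<and> measure \<mu> (A n - F) < d n"
    using inner_approx[OF sM fm Ab dpos] by blast
  then obtain F where F: "\<And>n. compact (F n)" "\<And>n. F n \<subseteq> A n" "\<And>n. measure \<mu> (A n - F n) < d n"
    by metis
  have "\<forall>n. \<exists>F. compact F \<and> F \<subseteq> G n \<and> measure \<mu> (G n - F) < d n"
    using inner_approx[OF sM fm Gb dpos] by blast
  then obtain H where H: "\<And>n. compact (H n)" "\<And>n. H n \<subseteq> G n" "\<And>n. measure \<mu> (G n - H n) < d n"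
    by metis
  define L where "L N = {x\<in>K. Q x \<le> ereal (real N)}" for N :: nat
  have Lc: "compact (L N)" for N
  proof -
    obtain T where T: "open T" "{x \<in> K. ereal (real N) < Q x} = K \<inter> T" using lscT by blast
    have "L N = K - {x \<in> K. ereal (real N) < Q x}" unfolding L_def by (auto simp: not_less)
    also have "\<dots> = K \<inter> (- T)" using T(2) by blast
    finally have "L N = K \<inter> (- T)" .
    then show ?thesis using K T(1) by (simp add: compact_Int_closed closed_Compl)
  qed
  have Lb: "L N \<in> sets \<mu>" for N using Lc sM by (simp add: borel_compact)
  have Ksm: "K \<in> sets \<mu>" using sM by simp
  have Linc: "incseq L"
    by (rule incseq_SucI) (auto simp: L_def intro: order_trans)
  have "(\<lambda>N. measure \<mu> (L N)) \<longlonglongrightarrow> measure \<mu> (\<Union>N. L N)"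
    using Lb Linc by (intro finite_Lim_measure_incseq) auto
  moreover have "measure \<mu> (\<Union>N. L N) = measure \<mu> K"
  proof (rule measure_eq_AE)
    show "AE x in \<mu>. (x \<in> (\<Union>N. L N)) = (x \<in> K)"
      using ae
    proof eventually_elim
      case (elim x)
      show ?case
      proof
        assume "x \<in> K"
        obtain N where "Q x \<le> ereal (real N)"
        proof (cases "Q x")
          case (real v)
          obtain N :: nat where "v \<le> real N" using real_arch_simple by blast
          then show ?thesis using that real by auto
        qed (use elim in auto)
        then show "x \<in> (\<Union>N. L N)" using \<open>x \<in> K\<close> by (auto simp: L_def)
      qed (auto simp: L_def)
    qed
  qed (use Lb Ksm in auto)
  ultimately have "(\<lambda>N. measure \<mu> (L N)) \<longlonglongrightarrow> measure \<mu> K" by simp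
  then have "eventually (\<lambda>N. measure \<mu> K - e/2 < measure \<mu> (L N)) sequentially"
    using e by (intro order_tendstoD) auto
  then obtain N where N: "measure \<mu> K - e/2 < measure \<mu> (L N)"
    by (auto dest: eventually_happens)
  have LK: "L N \<subseteq> K" by (auto simp: L_def)
  have mKL: "measure \<mu> (K - L N) < e/2"
    using N LK Lb Ksm by (simp add: finite_measure_Diff)
  define C where "C = L N \<inter> (\<Inter>n. F n \<union> H n)"
  have "closed (\<Inter>n. F n \<union> H n)" using F(1) H(1)
    by (intro closed_INT) (simp add: compact_imp_closed compact_Un)
  then have Cc: "compact C" unfolding C_def by (rule compact_Int_closed[OF Lc])
  have CK: "C \<subseteq> K" using LK by (auto simp: C_def)
  define D where "D n = (A n - F n) \<union> (G n - H n)" for n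
  have Fb: "F n \<in> sets borel" "H n \<in> sets borel" for n
    using F(1) H(1) by (simp_all add: borel_compact)
  have Db: "D n \<in> sets \<mu>" for n
    unfolding D_def sM using Ab Gb Fb by (intro sets.Un sets.Diff) auto
  have mD: "measure \<mu> (D n) \<le> 2 * d n" for n
  proof -
    have "measure \<mu> (D n) \<le> measure \<mu> (A n - F n) + measure \<mu> (G n - H n)"
      unfolding D_def using Ab Gb Fb sM
      by (intro measure_Un_le) auto
    also have "\<dots> \<le> 2 * d n" using F(3)[of n] H(3)[of n] by simp
    finally show ?thesis .
  qed
  have sd: "(\<lambda>n. 2 * d n) sums (e/2)"
  proof -
    have "(\<lambda>n. (1/2::real)^n) sums (1 / (1 - 1/2))" by (rule geometric_sums) simp
    then have "(\<lambda>n. (e/4) * (1/2::real)^n) sums ((e/4) * (1 / (1 - 1/2)))" by (rule sums_mult)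
    then show ?thesis by (simp add: d_def)
  qed
  have summD: "summable (\<lambda>n. measure \<mu> (D n))"
  proof (rule summable_comparison_test'[OF sums_summable[OF sd]])
    fix n :: nat
    show "norm (measure \<mu> (D n)) \<le> 2 * d n" using mD[of n] by simp
  qed
  have "measure \<mu> (\<Union>n. D n) \<le> (\<Sum>n. measure \<mu> (D n))"
    using Db summD by (intro finite_measure_subadditive_countably) auto
  also have "\<dots> \<le> (\<Sum>n. 2 * d n)"
    by (rule suminf_le[OF mD summD sums_summable[OF sd]])
  also have "\<dots> = e/2" using sd by (simp add: sums_iff)
  finally have mUD: "measure \<mu> (\<Union>n. D n) \<le> e/2" .
  have "K - C \<subseteq> (K - L N) \<union> (\<Union>n. D n)"
  proof
    fix x assume x: "x \<in> K - C"
    show "x \<in> (K - L N) \<union> (\<Union>n. D n)"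
    proof (cases "x \<in> L N")
      case True
      then obtain n where n: "x \<notin> F n \<union> H n" using x by (auto simp: C_def)
      have "x \<in> A n \<or> x \<in> G n" using x by (auto simp: A_def G_def not_less)
      then show ?thesis using n by (auto simp: D_def)
    next
      case False
      then show ?thesis using x by blast
    qed
  qed
  then have "measure \<mu> (K - C) \<le> measure \<mu> ((K - L N) \<union> (\<Union>n. D n))"
    using Ksm Lb Db by (intro finite_measure_mono) auto
  also have "\<dots> \<le> measure \<mu> (K - L N) + measure \<mu> (\<Union>n. D n)"
    using Ksm Lb Db by (intro measure_Un_le) auto
  finally have mKC: "measure \<mu> (K - C) < e" using mKL mUD by simp
  have fin: "\<bar>Q x\<bar> \<noteq> \<infinity>" if "x \<in> C" for x
  proof -
    have "Q x \<le> ereal (real N)" "Q x \<noteq> -\<infinity>" using that CK ninf by (auto simp: C_def L_def)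
    then show ?thesis by auto
  qed
  have cont: "continuous_on C Q"
    unfolding continuous_on_def
  proof (intro ballI order_tendstoI)
    fix x a assume x: "x \<in> C"
    {
      assume a: "a < Q x"
      obtain T where T: "open T" "{y \<in> K. a < Q y} = K \<inter> T" using lscT by blast
      have "x \<in> {y \<in> K. a < Q y}" using a x CK by auto
      then have "x \<in> K \<inter> T" unfolding T(2) .
      then have "x \<in> T" by simp
      moreover have "\<forall>y\<in>T. y \<noteq> x \<longrightarrow> y \<in> C \<longrightarrow> a < Q y"
      proof (intro ballI impI)
        fix y assume "y \<in> T" "y \<in> C"
        then have "y \<in> K \<inter> T" using CK by auto
        then have "y \<in> {y \<in> K. a < Q y}" unfolding T(2) .
        then show "a < Q y" by simp
      qed
      ultimately show "\<forall>\<^sub>F y in at x within C. a < Q y"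
        unfolding eventually_at_topological
        using T(1) by blast
    }
    {
      assume a: "Q x < a"
      obtain v where v: "Q x = ereal v" using fin[OF x] by (cases "Q x") auto
      obtain q where q: "q \<in> \<rat>" "v < q" "ereal q < a"
      proof (cases a)
        case (real w)
        then have "v < w" using a v by simp
        then obtain q where "q \<in> \<rat>" "v < q" "q < w" using Rats_dense_in_real by blast
        then show ?thesis using that real by auto
      next
        case PInf
        have "of_int (\<lfloor>v\<rfloor> + 1) \<in> \<rat>" by simp
        moreover have "v < of_int (\<lfloor>v\<rfloor> + 1)" by linarith
        ultimately show ?thesis using that[of "of_int (\<lfloor>v\<rfloor> + 1)"] PInf by simp
      next
        case MInf
        then show ?thesis using a by simp
      qed
      have "q \<in> range r" using rr q(1) by simp
      then obtain n where n: "r n = q" by blast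
      have "\<not> (ereal (r n) \<le> Q x)" using v q(2) n by simp
      then have "x \<notin> G n" by (simp add: G_def)
      then have "x \<notin> H n" using H(2)[of n] by blast
      have xF: "\<forall>y\<in>C. y \<notin> H n \<longrightarrow> y \<in> F n" unfolding C_def by blast
      show "\<forall>\<^sub>F y in at x within C. Q y < a"
        unfolding eventually_at_topological
      proof (intro exI[of _ "- H n"] conjI ballI impI)
        show "open (- H n)" using H(1) by (simp add: compact_imp_closed open_Compl)
        show "x \<in> - H n" using \<open>x \<notin> H n\<close> by simp
        fix y assume "y \<in> - H n" "y \<noteq> x" "y \<in> C"
        then have "y \<in> A n" using xF F(2) by blast
        then have "Q y < ereal q" using n by (simp add: A_def)
        then show "Q y < a" using q(3) by (rule less_trans)
      qed
    }
  qed
  show ?thesis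
    apply (rule exI[of _ C])
    using Cc CK mKC cont fin by simp
qed


lemma conv1:
  fixes M :: "'a measure"
  assumes inc: "incseq Ks" and Ks: "\<And>m. Ks m \<in> sets M" and ae: "AE x in M. x \<in> (\<Union>m. Ks m)"
    and h: "h \<in> borel_measurable M"
  shows "(\<lambda>m. \<integral>\<^sup>+x. indicator (Ks m) x * h x \<partial>M) \<longlonglongrightarrow> (\<integral>\<^sup>+x. h x \<partial>M)"
proof -
  let ?U = "\<Union>m. Ks m"
  have "(\<lambda>m. \<integral>\<^sup>+x. indicator (Ks m) x * h x \<partial>M) \<longlonglongrightarrow> (\<integral>\<^sup>+x. indicator ?U x * h x \<partial>M)"
  proof (rule nn_integral_LIMSEQ)
    show "incseq (\<lambda>m x. indicator (Ks m) x * h x)"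
      unfolding incseq_def le_fun_def
    proof (intro allI impI)
      fix m n :: nat and x assume "m \<le> n"
      then have "Ks m \<subseteq> Ks n" using inc by (simp add: incseq_def)
      then have "indicator (Ks m) x \<le> (indicator (Ks n) x :: ennreal)"
        by (auto simp: indicator_def)
      then show "indicator (Ks m) x * h x \<le> indicator (Ks n) x * h x"
        by (rule mult_right_mono) simp
    qed
    show "\<And>i. (\<lambda>x. indicator (Ks i) x * h x) \<in> borel_measurable M"
      using Ks h by measurable
    fix x
    show "(\<lambda>m. indicator (Ks m) x * h x) \<longlonglongrightarrow> indicator ?U x * h x"
    proof (cases "x \<in> ?U")
      case True
      then obtain m0 where "x \<in> Ks m0" by blast
      then have mem: "\<And>n. m0 \<le> n \<Longrightarrow> x \<in> Ks n" using inc unfolding incseq_def by blast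
      have "eventually (\<lambda>m. indicator (Ks m) x * h x = indicator ?U x * h x) sequentially"
        using True unfolding eventually_sequentially
        by (intro exI[of _ m0]) (simp add: mem)
      then show ?thesis by (rule tendsto_eventually)
    next
      case False
      then have "\<And>m. x \<notin> Ks m" by blast
      then show ?thesis using False by simp
    qed
  qed
  also have "(\<integral>\<^sup>+x. indicator ?U x * h x \<partial>M) = (\<integral>\<^sup>+x. h x \<partial>M)"
    using ae by (intro nn_integral_cong_AE) auto
  finally show ?thesis .
qed

lemma conv2:
  fixes M :: "'a measure"
  assumes inc: "incseq Ks" and Ks: "\<And>m. Ks m \<in> sets M" and ae: "AE x in M. x \<in> (\<Union>m. Ks m)"
    and sf: "sigma_finite_measure M"
    and h: "(\<lambda>p. h (fst p) (snd p)) \<in> borel_measurable (M \<Otimes>\<^sub>M M)"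
  shows "(\<lambda>m. \<integral>\<^sup>+x. indicator (Ks m) x * (\<integral>\<^sup>+y. indicator (Ks m) y * h x y \<partial>M) \<partial>M)
           \<longlonglongrightarrow> (\<integral>\<^sup>+x. \<integral>\<^sup>+y. h x y \<partial>M \<partial>M)"
proof -
  interpret sigma_finite_measure M by (rule sf)
  have hm[measurable]: "(\<lambda>(x, y). h x y) \<in> borel_measurable (M \<Otimes>\<^sub>M M)"
    using h by (simp add: case_prod_beta')
  have hx: "h x \<in> borel_measurable M" if "x \<in> space M" for x
    using measurable_Pair2[OF h that] by simp
  have Ksm[measurable]: "Ks m \<in> sets M" for m by (rule Ks)
  have inner: "(\<lambda>m. \<integral>\<^sup>+y. indicator (Ks m) y * h x y \<partial>M) \<longlonglongrightarrow> (\<integral>\<^sup>+y. h x y \<partial>M)"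
    if "x \<in> space M" for x
    by (rule conv1[OF inc Ks ae hx[OF that]])
  let ?U = "\<Union>m. Ks m"
  let ?F = "\<lambda>m x. indicator (Ks m) x * (\<integral>\<^sup>+y. indicator (Ks m) y * h x y \<partial>M)"
  have "(\<lambda>m. \<integral>\<^sup>+x. ?F m x \<partial>M) \<longlonglongrightarrow> (\<integral>\<^sup>+x. indicator ?U x * (\<integral>\<^sup>+y. h x y \<partial>M) \<partial>M)"
  proof (rule nn_integral_LIMSEQ)
    show "incseq ?F"
      unfolding incseq_def le_fun_def
    proof (intro allI impI)
      fix m n :: nat and x assume "m \<le> n"
      then have sub: "Ks m \<subseteq> Ks n" using inc by (simp add: incseq_def)
      then have i1: "\<And>z. indicator (Ks m) z \<le> (indicator (Ks n) z :: ennreal)"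
        by (auto simp: indicator_def)
      have "(\<integral>\<^sup>+y. indicator (Ks m) y * h x y \<partial>M) \<le> (\<integral>\<^sup>+y. indicator (Ks n) y * h x y \<partial>M)"
        by (intro nn_integral_mono mult_right_mono i1) simp
      then show "?F m x \<le> ?F n x"
        by (intro mult_mono i1) auto
    qed
    show "\<And>i. ?F i \<in> borel_measurable M"
      by measurable
    fix x
    show "(\<lambda>m. ?F m x) \<longlonglongrightarrow> indicator ?U x * (\<integral>\<^sup>+y. h x y \<partial>M)"
    proof (cases "x \<in> ?U")
      case True
      then obtain m0 where "x \<in> Ks m0" by blast
      then have mem: "\<And>n. m0 \<le> n \<Longrightarrow> x \<in> Ks n" using inc unfolding incseq_def by blast
      have ev: "eventually (\<lambda>m. indicator (Ks m) x = (1::ennreal)) sequentially"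
        unfolding eventually_sequentially
        by (intro exI[of _ m0]) (simp add: mem)
      have xs: "x \<in> space M" using \<open>x \<in> Ks m0\<close> Ks sets.sets_into_space by blast
      have "(\<lambda>m. 1 * (\<integral>\<^sup>+y. indicator (Ks m) y * h x y \<partial>M)) \<longlonglongrightarrow> 1 * (\<integral>\<^sup>+y. h x y \<partial>M)"
        using inner[OF xs] by simp
      moreover have "eventually (\<lambda>m. 1 * (\<integral>\<^sup>+y. indicator (Ks m) y * h x y \<partial>M) = ?F m x) sequentially"
        using ev by eventually_elim simp
      ultimately have "(\<lambda>m. ?F m x) \<longlonglongrightarrow> 1 * (\<integral>\<^sup>+y. h x y \<partial>M)"
        by (rule Lim_transform_eventually)
      then show ?thesis using True by simp
    next
      case False
      then have "\<And>m. x \<notin> Ks m" by blast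
      then show ?thesis using False by simp
    qed
  qed
  also have "(\<integral>\<^sup>+x. indicator ?U x * (\<integral>\<^sup>+y. h x y \<partial>M) \<partial>M) = (\<integral>\<^sup>+x. \<integral>\<^sup>+y. h x y \<partial>M \<partial>M)"
    using ae by (intro nn_integral_cong_AE) auto
  finally show ?thesis .
qed

lemma lsc_bdd_below:
  fixes Q :: "'a::metric_space \<Rightarrow> ereal"
  assumes K: "compact K" and lsc: "lsc_on K Q" and ninf: "\<forall>x\<in>K. Q x \<noteq> -\<infinity>"
  shows "\<exists>b::real. b \<ge> 0 \<and> (\<forall>x\<in>K. - ereal b \<le> Q x)"
proof -
  have "\<forall>n::nat. \<exists>T. open T \<and> {x \<in> K. - ereal (real n) < Q x} = K \<inter> T"
    using lsc unfolding lsc_on_def openin_open by blast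
  then obtain T where T: "\<And>n. open (T n)" "\<And>n. {x \<in> K. - ereal (real n) < Q x} = K \<inter> T n"
    by metis
  have cov: "K \<subseteq> (\<Union>n\<in>UNIV. T n)"
  proof
    fix x assume x: "x \<in> K"
    obtain n :: nat where n: "- ereal (real n) < Q x"
    proof (cases "Q x")
      case (real v)
      obtain n :: nat where "- v < real n" using reals_Archimedean2 by blast
      then show ?thesis using that[of n] real by simp
    next
      case PInf
      then show ?thesis using that[of 0] by simp
    next
      case MInf
      then show ?thesis using ninf x by simp
    qed
    then have "x \<in> {x \<in> K. - ereal (real n) < Q x}" using x by simp
    then have "x \<in> K \<inter> T n" unfolding T(2) .
    then show "x \<in> (\<Union>n\<in>UNIV. T n)" by blast
  qed
  obtain C' where C': "C' \<subseteq> UNIV" "finite C'" "K \<subseteq> (\<Union>n\<in>C'. T n)"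
    by (rule compactE_image[OF K T(1) cov]) blast
  obtain N where N: "\<forall>n\<in>C'. n \<le> N" using C'(2) finite_nat_set_iff_bounded_le by blast
  show ?thesis
  proof (intro exI[of _ "real N"] conjI ballI)
    fix x assume x: "x \<in> K"
    then obtain n where n: "n \<in> C'" "x \<in> T n" using C'(3) by blast
    then have "x \<in> K \<inter> T n" using x by simp
    then have "x \<in> {x \<in> K. - ereal (real n) < Q x}" unfolding T(2) .
    then have "- ereal (real n) < Q x" by simp
    moreover have "- ereal (real N) \<le> - ereal (real n)" using N n by simp
    ultimately show "- ereal (real N) \<le> Q x" by (meson less_imp_le order_trans)
  qed simp
qed


theorem lemma5p2:
  fixes K :: "'a::euclidean_space set" and \<mu> :: "'a measure" and Q :: "'a \<Rightarrow> ereal"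
  assumes "DIM('a) \<ge> 2"
    and "compact K" and "\<not> log_polar K"
    and "\<mu> \<in> prob_measures_on K" and "log_energy \<mu> < \<infinity>"
    and "admissible K Q"
    and "AE x in \<mu>. Q x < \<infinity>"
  shows "\<exists>Ks :: nat \<Rightarrow> 'a set. \<exists>\<mu>s :: nat \<Rightarrow> 'a measure.
           incseq Ks \<and> (\<forall>m. compact (Ks m) \<and> Ks m \<subseteq> K \<and> \<mu>s m \<in> prob_measures_on (Ks m))
         \<and> weak_conv_to \<mu>s \<mu>
         \<and> (\<forall>m. continuous_on (Ks m) Q \<and> (\<forall>x \<in> Ks m. \<bar>Q x\<bar> \<noteq> \<infinity>))
         \<and> (\<lambda>m. ext_integral (\<mu>s m) (\<lambda>x. if x \<in> K then Q x else 0))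
             \<longlonglongrightarrow> ext_integral \<mu> (\<lambda>x. if x \<in> K then Q x else 0)
         \<and> (\<lambda>m. log_energy (\<mu>s m)) \<longlonglongrightarrow> log_energy \<mu>"
proof -
  have pmu: "prob_space \<mu>" and sM: "sets \<mu> = sets borel" and muK: "emeasure \<mu> K = 1"
    using assms(4) by (auto simp: prob_measures_on_def)
  interpret prob_space \<mu> by (rule pmu)
  have fm: "finite_measure \<mu>" by (rule finite_measureI) simp
  have sp: "space \<mu> = UNIV" using sets_eq_imp_space_eq[OF sM] by simp
  have UNIVb[measurable]: "UNIV \<in> sets \<mu>" using sets.top[of \<mu>] sp by simp
  have lsc: "lsc_on K Q" and ninf: "\<forall>x\<in>K. Q x \<noteq> -\<infinity>"
    using assms(6) by (auto simp: admissible_def)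
  have K: "compact K" by (rule assms(2))
  have Kb[measurable]: "K \<in> sets \<mu>" using K sM by (simp add: borel_compact)
  have mK: "measure \<mu> K = 1" using muK by (simp add: emeasure_eq_measure)
  have bmeq: "borel_measurable \<mu> = borel_measurable borel"
    by (rule measurable_cong_sets[OF sM refl])
  have "\<forall>m::nat. \<exists>C. compact C \<and> C \<subseteq> K \<and> measure \<mu> (K - C) < (1/2)^(m+2) \<and> continuous_on C Q
             \<and> (\<forall>x\<in>C. \<bar>Q x\<bar> \<noteq> \<infinity>)"
  proof
    fix m :: nat
    show "\<exists>C. compact C \<and> C \<subseteq> K \<and> measure \<mu> (K - C) < (1/2)^(m+2) \<and> continuous_on C Q
             \<and> (\<forall>x\<in>C. \<bar>Q x\<bar> \<noteq> \<infinity>)"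
      by (rule lusin[OF sM fm K lsc ninf assms(7)]) simp
  qed
  then obtain C where C: "\<And>m. compact (C m)" "\<And>m. C m \<subseteq> K"
    "\<And>m. measure \<mu> (K - C m) < (1/2)^(m+2)" "\<And>m. continuous_on (C m) Q"
    "\<And>m. \<forall>x\<in>C m. \<bar>Q x\<bar> \<noteq> \<infinity>"
    by metis
  define Ks where "Ks m = (\<Union>i\<le>m. C i)" for m
  have inc: "incseq Ks" unfolding incseq_def Ks_def
    by (intro allI impI UN_mono) auto
  have Ksc: "compact (Ks m)" for m unfolding Ks_def using C(1) by (intro compact_UN) auto
  have KsK: "Ks m \<subseteq> K" for m unfolding Ks_def using C(2) by blast
  have Kscont: "continuous_on (Ks m) Q" for m unfolding Ks_def
    using C(1,4) by (intro continuous_on_closed_Union) (auto intro: compact_imp_closed)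
  have Ksfin: "\<forall>x\<in>Ks m. \<bar>Q x\<bar> \<noteq> \<infinity>" for m unfolding Ks_def using C(5) by simp
  have Ksb[measurable]: "Ks m \<in> sets \<mu>" for m using Ksc sM by (simp add: borel_compact)
  have Cb[measurable]: "C m \<in> sets \<mu>" for m using C(1) sM by (simp add: borel_compact)
  have mKK: "measure \<mu> (K - Ks m) \<le> (1/2)^(m+2)" for m
  proof -
    have "K - Ks m \<subseteq> K - C m" unfolding Ks_def by blast
    then have "measure \<mu> (K - Ks m) \<le> measure \<mu> (K - C m)"
      by (rule finite_measure_mono) measurable
    then show ?thesis using C(3)[of m] by simp
  qed
  define c where "c m = measure \<mu> (Ks m)" for m
  have cval: "c m = 1 - measure \<mu> (K - Ks m)" for m
    using KsK[of m] mK by (simp add: c_def finite_measure_Diff)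
  have cpos: "c m > 0" for m
  proof -
    have "(1/2::real)^(m+2) = 1/4 * (1/2)^m" by (simp add: power_add)
    moreover have "(1/2::real)^m \<le> 1" by (simp add: power_le_one)
    ultimately have "(1/2::real)^(m+2) \<le> 1/4" by simp
    then show ?thesis using cval[of m] mKK[of m] by simp
  qed
  have lim0: "(\<lambda>m. measure \<mu> (K - Ks m)) \<longlonglongrightarrow> 0"
  proof (rule tendsto_sandwich[of "\<lambda>_. 0" _ _ "\<lambda>m. (1/2::real)^(m+2)"])
    show "\<forall>\<^sub>F n in sequentially. 0 \<le> measure \<mu> (K - Ks n)" by simp
    show "\<forall>\<^sub>F n in sequentially. measure \<mu> (K - Ks n) \<le> (1/2)^(n+2)" using mKK by simp
    show "(\<lambda>m. (1/2::real)^(m+2)) \<longlonglongrightarrow> 0"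
      by (rule LIMSEQ_ignore_initial_segment[OF LIMSEQ_power_zero]) simp
  qed simp
  have clim: "c \<longlonglongrightarrow> 1"
  proof -
    have "(\<lambda>m. 1 - measure \<mu> (K - Ks m)) \<longlonglongrightarrow> 1 - 0"
      by (intro tendsto_diff tendsto_const lim0)
    moreover have "c = (\<lambda>m. 1 - measure \<mu> (K - Ks m))" by (rule ext) (rule cval)
    ultimately show ?thesis by simp
  qed
  define U where "U = (\<Union>m. Ks m)"
  have compK: "measure \<mu> (UNIV - K) = 0"
    using prob_compl[OF Kb] mK sp by simp
  have aeU: "AE x in \<mu>. x \<in> (\<Union>m. Ks m)"
  proof (rule AE_I')
    have Ub: "UNIV - U \<in> sets \<mu>" unfolding U_def by measurable
    have le: "measure \<mu> (UNIV - U) \<le> measure \<mu> (K - Ks m)" for m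
    proof -
      have "UNIV - U \<subseteq> (UNIV - K) \<union> (K - Ks m)" unfolding U_def by blast
      then have "measure \<mu> (UNIV - U) \<le> measure \<mu> ((UNIV - K) \<union> (K - Ks m))"
        by (rule finite_measure_mono) measurable
      also have "\<dots> \<le> measure \<mu> (UNIV - K) + measure \<mu> (K - Ks m)"
        by (rule measure_Un_le) measurable
      finally show ?thesis using compK by simp
    qed
    have "measure \<mu> (UNIV - U) \<le> 0"
      by (rule LIMSEQ_le_const[OF lim0]) (use le in blast)
    then have "emeasure \<mu> (UNIV - U) = 0" by (simp add: emeasure_eq_measure measure_le_0_iff)
    then show "UNIV - U \<in> null_sets \<mu>" using Ub by (simp add: null_setsI)
    show "{x \<in> space \<mu>. x \<notin> (\<Union>m. Ks m)} \<subseteq> UNIV - U" unfolding U_def by blast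
  qed
  have aeK: "AE x in \<mu>. x \<in> K"
  proof (rule AE_I')
    show "UNIV - K \<in> null_sets \<mu>" using compK by (simp add: null_setsI emeasure_eq_measure)
  qed (use sp in blast)
  define g where "g m x = indicator (Ks m) x / c m" for m x
  define \<mu>s where "\<mu>s m = density \<mu> (\<lambda>x. ennreal (g m x))" for m
  have gm[measurable]: "g m \<in> borel_measurable \<mu>" for m unfolding g_def by measurable
  have dens: "integral\<^sup>N (\<mu>s m) h = ennreal (1 / c m) * (\<integral>\<^sup>+x. indicator (Ks m) x * h x \<partial>\<mu>)"
    if h[measurable]: "h \<in> borel_measurable \<mu>" for m h
  proof -
    have "integral\<^sup>N (\<mu>s m) h = (\<integral>\<^sup>+x. ennreal (g m x) * h x \<partial>\<mu>)"
      unfolding \<mu>s_def by (rule nn_integral_density) measurable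
    also have "\<dots> = (\<integral>\<^sup>+x. ennreal (1 / c m) * (indicator (Ks m) x * h x) \<partial>\<mu>)"
      by (intro nn_integral_cong) (simp add: g_def indicator_def)
    also have "\<dots> = ennreal (1 / c m) * (\<integral>\<^sup>+x. indicator (Ks m) x * h x \<partial>\<mu>)"
      by (rule nn_integral_cmult) measurable
    finally show ?thesis .
  qed
  have sets_mus: "sets (\<mu>s m) = sets borel" for m by (simp add: \<mu>s_def sM)
  have sp_mus: "space (\<mu>s m) = UNIV" for m by (simp add: \<mu>s_def sp)
  have em_mus: "emeasure (\<mu>s m) A = ennreal (1 / c m) * emeasure \<mu> (Ks m \<inter> A)"
    if A[measurable]: "A \<in> sets \<mu>" for m A
  proof -
    have "emeasure (\<mu>s m) A = integral\<^sup>N (\<mu>s m) (indicator A)"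
      using A by (simp add: nn_integral_indicator sets_mus sM)
    also have "\<dots> = ennreal (1 / c m) * (\<integral>\<^sup>+x. indicator (Ks m \<inter> A) x \<partial>\<mu>)"
      by (simp only: dens[OF borel_measurable_indicator[OF A]] indicator_inter_arith)
    also have "\<dots> = ennreal (1 / c m) * emeasure \<mu> (Ks m \<inter> A)"
      by (rule arg_cong[where f="\<lambda>z. ennreal (1 / c m) * z"], rule nn_integral_indicator) measurable
    finally show ?thesis .
  qed
  have one: "ennreal (1 / c m) * emeasure \<mu> (Ks m) = 1" for m
  proof -
    have "ennreal (1 / c m) * emeasure \<mu> (Ks m) = ennreal (1 / c m) * ennreal (c m)"
      by (simp add: c_def emeasure_eq_measure)
    also have "\<dots> = ennreal (1 / c m * c m)" using cpos[of m] by (subst ennreal_mult[symmetric]) auto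
    also have "\<dots> = 1" using cpos[of m] by simp
    finally show ?thesis .
  qed
  have mus_prob: "\<mu>s m \<in> prob_measures_on (Ks m)" for m
  proof -
    have "emeasure (\<mu>s m) (space (\<mu>s m)) = 1"
      using em_mus[of UNIV m] one[of m] by (simp add: sp_mus)
    then have "prob_space (\<mu>s m)" by (rule prob_spaceI)
    moreover have "emeasure (\<mu>s m) (Ks m) = 1"
      using em_mus[of "Ks m" m] one[of m] by simp
    ultimately show ?thesis by (simp add: prob_measures_on_def sets_mus)
  qed
  have weak: "weak_conv_to \<mu>s \<mu>"
    unfolding weak_conv_to_def
  proof (intro allI impI)
    fix f :: "'a \<Rightarrow> real" assume f: "continuous_on UNIV f \<and> bounded (range f)"
    then obtain B where B: "\<And>x. norm (f x) \<le> B" unfolding bounded_iff by blast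
    have fmeas[measurable]: "f \<in> borel_measurable \<mu>"
      unfolding bmeq using f by (simp add: borel_measurable_continuous_onI)
    have gnn: "AE x in \<mu>. 0 \<le> g m x" for m
      unfolding g_def using cpos[of m] by (intro AE_I2 divide_nonneg_nonneg) auto
    have eq: "integral\<^sup>L (\<mu>s m) f = 1 / c m * (\<integral>x. indicator (Ks m) x * f x \<partial>\<mu>)" for m
    proof -
      have "integral\<^sup>L (\<mu>s m) f = (\<integral>x. g m x *\<^sub>R f x \<partial>\<mu>)"
        unfolding \<mu>s_def
        by (rule integral_density[OF fmeas gm gnn])
      also have "\<dots> = (\<integral>x. 1 / c m * (indicator (Ks m) x * f x) \<partial>\<mu>)"
        by (simp add: g_def)
      also have "\<dots> = 1 / c m * (\<integral>x. indicator (Ks m) x * f x \<partial>\<mu>)"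
        by (rule integral_mult_right_zero)
      finally show ?thesis .
    qed
    have lim: "(\<lambda>m. \<integral>x. indicator (Ks m) x * f x \<partial>\<mu>) \<longlonglongrightarrow> integral\<^sup>L \<mu> f"
    proof (rule integral_dominated_convergence[where w="\<lambda>_. B"])
      show "f \<in> borel_measurable \<mu>" by measurable
      show "\<And>i. (\<lambda>x. indicator (Ks i) x * f x) \<in> borel_measurable \<mu>" by measurable
      show "integrable \<mu> (\<lambda>_. B)" by simp
      show "AE x in \<mu>. (\<lambda>i. indicator (Ks i) x * f x) \<longlonglongrightarrow> f x"
        using aeU
      proof eventually_elim
        case (elim x)
        then obtain m0 where "x \<in> Ks m0" by blast
        then have mem: "\<And>n. m0 \<le> n \<Longrightarrow> x \<in> Ks n" using inc unfolding incseq_def by blast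
        have "eventually (\<lambda>m. indicator (Ks m) x * f x = f x) sequentially"
          unfolding eventually_sequentially by (intro exI[of _ m0]) (simp add: mem)
        then show ?case by (rule tendsto_eventually)
      qed
      show "\<And>i. AE x in \<mu>. norm (indicator (Ks i) x * f x) \<le> B"
      proof (rule AE_I2)
        fix i x
        have "norm (indicator (Ks i) x * f x) \<le> norm (f x)"
          by (simp add: indicator_def)
        then show "norm (indicator (Ks i) x * f x) \<le> B" using B[of x] by linarith
      qed
    qed
    have "(\<lambda>m. 1 / c m * (\<integral>x. indicator (Ks m) x * f x \<partial>\<mu>)) \<longlonglongrightarrow> 1 / 1 * integral\<^sup>L \<mu> f"
      by (intro tendsto_mult tendsto_divide tendsto_const clim lim) simp
    then show "(\<lambda>m. integral\<^sup>L (\<mu>s m) f) \<longlonglongrightarrow> integral\<^sup>L \<mu> f"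
      by (simp add: eq)
  qed
  define Q' where "Q' = (\<lambda>x. if x \<in> K then Q x else 0)"
  have Q'm[measurable]: "Q' \<in> borel_measurable \<mu>"
    unfolding Q'_def bmeq by (rule lsc_meas[OF lsc compact_imp_closed[OF K]])
  have ac: "(\<lambda>m. ennreal (1 / c m)) \<longlonglongrightarrow> ennreal (1 / 1)"
    by (intro tendsto_ennrealI tendsto_divide tendsto_const clim) simp
  have conv_dens: "(\<lambda>m. integral\<^sup>N (\<mu>s m) h) \<longlonglongrightarrow> integral\<^sup>N \<mu> h"
    if h[measurable]: "h \<in> borel_measurable \<mu>" for h
  proof -
    have "(\<lambda>m. ennreal (1 / c m) * (\<integral>\<^sup>+x. indicator (Ks m) x * h x \<partial>\<mu>)) \<longlonglongrightarrow>
           ennreal (1/1) * integral\<^sup>N \<mu> h"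
      by (rule tendsto_mult_ennreal[OF ac conv1[OF inc Ksb aeU h]]) simp
    then show ?thesis by (simp add: dens)
  qed
  obtain b where b: "b \<ge> 0" "\<forall>x\<in>K. - ereal b \<le> Q x"
    using lsc_bdd_below[OF K lsc ninf] by blast
  have negfin: "(\<integral>\<^sup>+x. e2ennreal (- Q' x) \<partial>\<mu>) \<noteq> top"
  proof -
    have "(\<integral>\<^sup>+x. e2ennreal (- Q' x) \<partial>\<mu>) \<le> (\<integral>\<^sup>+x. ennreal b \<partial>\<mu>)"
    proof (rule nn_integral_mono)
      fix x
      have "- Q' x \<le> ereal b"
      proof (cases "x \<in> K")
        case True
        then have "- ereal b \<le> Q x" using b by blast
        then show ?thesis using True by (simp add: Q'_def ereal_uminus_le_reorder)
      qed (use b in \<open>simp add: Q'_def\<close>)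
      then have "e2ennreal (- Q' x) \<le> e2ennreal (ereal b)" by (rule e2ennreal_mono)
      then show "e2ennreal (- Q' x) \<le> ennreal b" by simp
    qed
    also have "\<dots> = ennreal b" by (simp add: emeasure_space_1)
    finally show ?thesis by (rule neq_top_trans[OF ennreal_neq_top])
  qed
  have Qconv: "(\<lambda>m. ext_integral (\<mu>s m) Q') \<longlonglongrightarrow> ext_integral \<mu> Q'"
    unfolding ext_integral_def
  proof (rule tendsto_diff_ereal_general)
    show "(\<lambda>m. enn2ereal (\<integral>\<^sup>+x. e2ennreal (Q' x) \<partial>\<mu>s m)) \<longlonglongrightarrow> enn2ereal (\<integral>\<^sup>+x. e2ennreal (Q' x) \<partial>\<mu>)"
      by (intro tendsto_enn2erealI conv_dens) measurable
    show "(\<lambda>m. enn2ereal (\<integral>\<^sup>+x. e2ennreal (- Q' x) \<partial>\<mu>s m)) \<longlonglongrightarrow> enn2ereal (\<integral>\<^sup>+x. e2ennreal (- Q' x) \<partial>\<mu>)"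
      by (intro tendsto_enn2erealI conv_dens) measurable
    show "\<not> (enn2ereal (\<integral>\<^sup>+x. e2ennreal (Q' x) \<partial>\<mu>) = \<infinity> \<and> enn2ereal (\<integral>\<^sup>+x. e2ennreal (- Q' x) \<partial>\<mu>) = \<infinity> \<or>
        enn2ereal (\<integral>\<^sup>+x. e2ennreal (Q' x) \<partial>\<mu>) = - \<infinity> \<and> enn2ereal (\<integral>\<^sup>+x. e2ennreal (- Q' x) \<partial>\<mu>) = - \<infinity>)"
      using negfin by simp
  qed
  have kposm[measurable]: "(\<lambda>(x, y). log_kernel_pos x y) \<in> borel_measurable (\<mu> \<Otimes>\<^sub>M \<mu>)"
    unfolding measurable_cong_sets[OF sets_pair_measure_cong[OF sM sM] refl] case_prod_beta'
    by (rule kpos_meas)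
  have knegm[measurable]: "(\<lambda>(x, y). log_kernel_neg x y) \<in> borel_measurable (\<mu> \<Otimes>\<^sub>M \<mu>)"
    unfolding measurable_cong_sets[OF sets_pair_measure_cong[OF sM sM] refl] case_prod_beta'
    by (rule kneg_meas)
  have econv: "(\<lambda>m. \<integral>\<^sup>+x. \<integral>\<^sup>+y. k x y \<partial>\<mu>s m \<partial>\<mu>s m) \<longlonglongrightarrow> (\<integral>\<^sup>+x. \<integral>\<^sup>+y. k x y \<partial>\<mu> \<partial>\<mu>)"
    if km[measurable]: "(\<lambda>(x, y). k x y) \<in> borel_measurable (\<mu> \<Otimes>\<^sub>M \<mu>)" for k :: "'a \<Rightarrow> 'a \<Rightarrow> ennreal"
  proof -
    have kx[measurable]: "k x \<in> borel_measurable \<mu>" for x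
      using measurable_Pair2[OF km, of x] by (simp add: sp)
    have step: "(\<integral>\<^sup>+x. \<integral>\<^sup>+y. k x y \<partial>\<mu>s m \<partial>\<mu>s m) =
        ennreal (1 / c m) * (ennreal (1 / c m) *
          (\<integral>\<^sup>+x. indicator (Ks m) x * (\<integral>\<^sup>+y. indicator (Ks m) y * k x y \<partial>\<mu>) \<partial>\<mu>))" for m
    proof -
      have "(\<integral>\<^sup>+x. \<integral>\<^sup>+y. k x y \<partial>\<mu>s m \<partial>\<mu>s m) =
          (\<integral>\<^sup>+x. ennreal (1 / c m) * (\<integral>\<^sup>+y. indicator (Ks m) y * k x y \<partial>\<mu>) \<partial>\<mu>s m)"
        by (intro nn_integral_cong) (simp add: dens)
      also have "\<dots> = ennreal (1 / c m) * (\<integral>\<^sup>+x. indicator (Ks m) x *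
                 (ennreal (1 / c m) * (\<integral>\<^sup>+y. indicator (Ks m) y * k x y \<partial>\<mu>)) \<partial>\<mu>)"
        by (rule dens) measurable
      also have "(\<integral>\<^sup>+x. indicator (Ks m) x *
                 (ennreal (1 / c m) * (\<integral>\<^sup>+y. indicator (Ks m) y * k x y \<partial>\<mu>)) \<partial>\<mu>)
          = (\<integral>\<^sup>+x. ennreal (1 / c m) * (indicator (Ks m) x * (\<integral>\<^sup>+y. indicator (Ks m) y * k x y \<partial>\<mu>)) \<partial>\<mu>)"
        by (simp add: mult_ac)
      also have "\<dots> = ennreal (1 / c m) * (\<integral>\<^sup>+x. indicator (Ks m) x * (\<integral>\<^sup>+y. indicator (Ks m) y * k x y \<partial>\<mu>) \<partial>\<mu>)"
        by (rule nn_integral_cmult) measurable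
      finally show ?thesis .
    qed
    have k2: "(\<lambda>p. k (fst p) (snd p)) \<in> borel_measurable (\<mu> \<Otimes>\<^sub>M \<mu>)"
      using km by (simp add: case_prod_beta')
    have "(\<lambda>m. ennreal (1 / c m) * (ennreal (1 / c m) *
          (\<integral>\<^sup>+x. indicator (Ks m) x * (\<integral>\<^sup>+y. indicator (Ks m) y * k x y \<partial>\<mu>) \<partial>\<mu>)))
        \<longlonglongrightarrow> ennreal (1/1) * (ennreal (1/1) * (\<integral>\<^sup>+x. \<integral>\<^sup>+y. k x y \<partial>\<mu> \<partial>\<mu>))"
      by (intro tendsto_mult_ennreal[OF ac] tendsto_mult_ennreal[OF ac]
          conv2[OF inc Ksb aeU _ k2]) (simp_all add: sigma_finite_measure_axioms)
    then show ?thesis by (simp add: step)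
  qed
  obtain d where d: "\<forall>x\<in>K. \<forall>y\<in>K. dist x y \<le> d"
    using compact_imp_bounded[OF K] unfolding bounded_two_points by blast
  define dd where "dd = max d 0"
  have kneg_bd: "log_kernel_neg x y \<le> ennreal dd" if "x \<in> K" "y \<in> K" for x y
  proof (cases "x = y")
    case False
    then have pos: "0 < dist x y" by simp
    have "ln (dist x y) \<le> dist x y - 1" by (rule ln_le_minus_one[OF pos])
    then have "max 0 (ln (dist x y)) \<le> dd" using d that unfolding dd_def by fastforce
    then show ?thesis using False by (simp add: log_kernel_neg_def ennreal_leI)
  qed (simp add: log_kernel_neg_def)
  have negfin2: "(\<integral>\<^sup>+x. \<integral>\<^sup>+y. log_kernel_neg x y \<partial>\<mu> \<partial>\<mu>) \<noteq> top"
  proof -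
    have "(\<integral>\<^sup>+x. \<integral>\<^sup>+y. log_kernel_neg x y \<partial>\<mu> \<partial>\<mu>) \<le> (\<integral>\<^sup>+x. ennreal dd \<partial>\<mu>)"
    proof (rule nn_integral_mono_AE)
      show "AE x in \<mu>. (\<integral>\<^sup>+y. log_kernel_neg x y \<partial>\<mu>) \<le> ennreal dd"
        using aeK
      proof eventually_elim
        case (elim x)
        have "(\<integral>\<^sup>+y. log_kernel_neg x y \<partial>\<mu>) \<le> (\<integral>\<^sup>+y. ennreal dd \<partial>\<mu>)"
          by (rule nn_integral_mono_AE, rule AE_mp[OF aeK], intro AE_I2 impI kneg_bd[OF elim])
        also have "\<dots> = ennreal dd" by (simp add: emeasure_space_1)
        finally show ?case .
      qed
    qed
    also have "\<dots> = ennreal dd" by (simp add: emeasure_space_1)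
    finally show ?thesis by (rule neq_top_trans[OF ennreal_neq_top])
  qed
  have Econv: "(\<lambda>m. log_energy (\<mu>s m)) \<longlonglongrightarrow> log_energy \<mu>"
    unfolding log_energy_def
  proof (rule tendsto_diff_ereal_general)
    show "(\<lambda>m. enn2ereal (\<integral>\<^sup>+x. \<integral>\<^sup>+y. log_kernel_pos x y \<partial>\<mu>s m \<partial>\<mu>s m))
        \<longlonglongrightarrow> enn2ereal (\<integral>\<^sup>+x. \<integral>\<^sup>+y. log_kernel_pos x y \<partial>\<mu> \<partial>\<mu>)"
      by (intro tendsto_enn2erealI econv kposm)
    show "(\<lambda>m. enn2ereal (\<integral>\<^sup>+x. \<integral>\<^sup>+y. log_kernel_neg x y \<partial>\<mu>s m \<partial>\<mu>s m))
        \<longlonglongrightarrow> enn2ereal (\<integral>\<^sup>+x. \<integral>\<^sup>+y. log_kernel_neg x y \<partial>\<mu> \<partial>\<mu>)"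
      by (intro tendsto_enn2erealI econv knegm)
    show "\<not> (enn2ereal (\<integral>\<^sup>+x. \<integral>\<^sup>+y. log_kernel_pos x y \<partial>\<mu> \<partial>\<mu>) = \<infinity> \<and>
           enn2ereal (\<integral>\<^sup>+x. \<integral>\<^sup>+y. log_kernel_neg x y \<partial>\<mu> \<partial>\<mu>) = \<infinity> \<or>
           enn2ereal (\<integral>\<^sup>+x. \<integral>\<^sup>+y. log_kernel_pos x y \<partial>\<mu> \<partial>\<mu>) = - \<infinity> \<and>
           enn2ereal (\<integral>\<^sup>+x. \<integral>\<^sup>+y. log_kernel_neg x y \<partial>\<mu> \<partial>\<mu>) = - \<infinity>)"
      using negfin2 by simp
  qed
  show ?thesis
    apply (rule exI[of _ Ks], rule exI[of _ \<mu>s])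
    using inc Ksc KsK mus_prob weak Kscont Ksfin Qconv Econv unfolding Q'_def
    by simp
qed


end
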